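(* For any finite simple graph $G$, $|\operatorname{nucleus}(G)| + |\operatorname{diadem}(G)| \le 2\alpha(G)$.
   Context: For $X\subseteq V(G)$, $N(X)$ is the set of vertices adjacent to some vertex of $X$, and $d(X)=|X|-|N(X)|$. A set is independent if no two of its vertices are adjacent. An independent set $S$ is critical if $d(S)=\max\{d(X):X\subseteq V(G)\}$; the empty set may be critical. A maximum critical independent set is a critical independent set of maximum cardinality. $\operatorname{nucleus}(G)$ and $\operatorname{diadem}(G)$ are, respectively, the intersection and the union of all maximum critical independent sets of $G$. $\alpha(G)$ is the independence number. *)

theory Defs
  imports Main
begin

definition simple_graph :: "'a set \<Rightarrow> ('a \<Rightarrow> 'a \<Rightarrow> bool) \<Rightarrow> bool" where
  "simple_graph V E \<longleftrightarrow> finite V \<and> (\<forall>u v. E u v \<longrightarrow> u \<in> V \<and> v \<in> V)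
     \<and> (\<forall>u v. E u v \<longrightarrow> E v u) \<and> (\<forall>v. \<not> E v v)"

definition nbhd :: "'a set \<Rightarrow> ('a \<Rightarrow> 'a \<Rightarrow> bool) \<Rightarrow> 'a set \<Rightarrow> 'a set" where
  "nbhd V E X = {v \<in> V. \<exists>x \<in> X. E x v}"

definition dif :: "'a set \<Rightarrow> ('a \<Rightarrow> 'a \<Rightarrow> bool) \<Rightarrow> 'a set \<Rightarrow> int" where
  "dif V E X = int (card X) - int (card (nbhd V E X))"

definition indep :: "'a set \<Rightarrow> ('a \<Rightarrow> 'a \<Rightarrow> bool) \<Rightarrow> 'a set \<Rightarrow> bool" where
  "indep V E S \<longleftrightarrow> S \<subseteq> V \<and> (\<forall>x \<in> S. \<forall>y \<in> S. \<not> E x y)"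

definition critical_difference :: "'a set \<Rightarrow> ('a \<Rightarrow> 'a \<Rightarrow> bool) \<Rightarrow> int" where
  "critical_difference V E = Max (dif V E ` Pow V)"

definition critical_indep :: "'a set \<Rightarrow> ('a \<Rightarrow> 'a \<Rightarrow> bool) \<Rightarrow> 'a set \<Rightarrow> bool" where
  "critical_indep V E S \<longleftrightarrow> indep V E S \<and> dif V E S = critical_difference V E"

definition max_critical_indep :: "'a set \<Rightarrow> ('a \<Rightarrow> 'a \<Rightarrow> bool) \<Rightarrow> 'a set \<Rightarrow> bool" where
  "max_critical_indep V E S \<longleftrightarrow> critical_indep V E S \<and>
     (\<forall>T. critical_indep V E T \<longrightarrow> card T \<le> card S)"

definition nucleus :: "'a set \<Rightarrow> ('a \<Rightarrow> 'a \<Rightarrow> bool) \<Rightarrow> 'a set" where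
  "nucleus V E = \<Inter> {S. max_critical_indep V E S}"

definition diadem :: "'a set \<Rightarrow> ('a \<Rightarrow> 'a \<Rightarrow> bool) \<Rightarrow> 'a set" where
  "diadem V E = \<Union> {S. max_critical_indep V E S}"

definition indep_number :: "'a set \<Rightarrow> ('a \<Rightarrow> 'a \<Rightarrow> bool) \<Rightarrow> nat" where
  "indep_number V E = Max (card ` {S. indep V E S})"

end

theory Submission
  imports Defs
begin

lemma nbhd_sub: "nbhd V E X \<subseteq> V" by (auto simp: nbhd_def)
lemma nbhd_Un: "nbhd V E (A \<union> B) = nbhd V E A \<union> nbhd V E B" by (auto simp: nbhd_def)
lemma nbhd_mono: "A \<subseteq> B \<Longrightarrow> nbhd V E A \<subseteq> nbhd V E B" by (auto simp: nbhd_def)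

lemma crit_ge:
  assumes "finite V" "X \<subseteq> V"
  shows "dif V E X \<le> critical_difference V E"
  unfolding critical_difference_def using assms by (intro Max_ge) auto

lemma crit_attained:
  assumes "finite V"
  shows "\<exists>X\<subseteq>V. dif V E X = critical_difference V E"
proof -
  have "critical_difference V E \<in> dif V E ` Pow V"
    unfolding critical_difference_def using assms by (intro Max_in) auto
  then obtain X where "critical_difference V E = dif V E X" "X \<in> Pow V" by (rule imageE)
  hence "X \<subseteq> V \<and> dif V E X = critical_difference V E" by simp
  thus ?thesis by (rule exI)
qed

lemma supermod:
  assumes "finite V" "A \<subseteq> V" "B \<subseteq> V"
  shows "dif V E A + dif V E B \<le> dif V E (A \<union> B) + dif V E (A \<inter> B)"
proof -
  have fA: "finite A" "finite B" using finite_subset[OF assms(2,1)] finite_subset[OF assms(3,1)] by auto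
  have fN: "finite (nbhd V E A)" "finite (nbhd V E B)"
    using finite_subset[OF nbhd_sub assms(1)] by blast+
  have c1: "card A + card B = card (A \<union> B) + card (A \<inter> B)"
    by (rule card_Un_Int[OF fA])
  have c2: "card (nbhd V E A) + card (nbhd V E B) = card (nbhd V E A \<union> nbhd V E B) + card (nbhd V E A \<inter> nbhd V E B)"
    by (rule card_Un_Int[OF fN])
  have "nbhd V E (A \<inter> B) \<subseteq> nbhd V E A \<inter> nbhd V E B"
    by (intro Int_greatest nbhd_mono Int_lower1 Int_lower2)
  hence c3: "card (nbhd V E (A \<inter> B)) \<le> card (nbhd V E A \<inter> nbhd V E B)"
    by (rule card_mono[rotated]) (use fN in blast)
  have "dif V E A + dif V E B = int (card A + card B) - int (card (nbhd V E A) + card (nbhd V E B))"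
    unfolding dif_def by simp
  also have "\<dots> = int (card (A \<union> B) + card (A \<inter> B)) - int (card (nbhd V E A \<union> nbhd V E B) + card (nbhd V E A \<inter> nbhd V E B))"
    using c1 c2 by simp
  also have "\<dots> \<le> dif V E (A \<union> B) + dif V E (A \<inter> B)"
    unfolding dif_def nbhd_Un using c3 by simp
  finally show ?thesis .
qed

lemma crit_Un_Int:
  assumes "finite V" "A \<subseteq> V" "B \<subseteq> V"
    "dif V E A = critical_difference V E" "dif V E B = critical_difference V E"
  shows "dif V E (A \<union> B) = critical_difference V E \<and> dif V E (A \<inter> B) = critical_difference V E"
proof -
  have "dif V E (A \<union> B) \<le> critical_difference V E" using assms by (intro crit_ge) auto
  moreover have "dif V E (A \<inter> B) \<le> critical_difference V E" using assms by (intro crit_ge) auto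
  ultimately show ?thesis using supermod[OF assms(1-3), of E] assms(4,5) by linarith
qed

lemma Inter_crit:
  assumes "finite V" "finite F" "F \<noteq> {}" "\<forall>X\<in>F. X \<subseteq> V \<and> dif V E X = critical_difference V E"
  shows "\<Inter>F \<subseteq> V \<and> dif V E (\<Inter>F) = critical_difference V E"
  using assms(2,3,4)
proof (induction F rule: finite_ne_induct)
  case (singleton x) then show ?case by auto
next
  case (insert x F)
  then have "\<Inter>F \<subseteq> V" "dif V E (\<Inter>F) = critical_difference V E" by auto
  moreover have "x \<subseteq> V" "dif V E x = critical_difference V E" using insert by auto
  ultimately show ?case using crit_Un_Int[OF assms(1), of x "\<Inter>F" E] by auto
qed

lemma strip:
  assumes "simple_graph V E" "X \<subseteq> V"
  shows "indep V E (X - nbhd V E X) \<and> dif V E X \<le> dif V E (X - nbhd V E X)"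
proof -
  let ?I = "X - nbhd V E X"
  have fV: "finite V" using assms unfolding simple_graph_def by auto
  have sym: "\<And>u v. E u v \<Longrightarrow> E v u" and inV: "\<And>u v. E u v \<Longrightarrow> u \<in> V \<and> v \<in> V"
    using assms unfolding simple_graph_def by auto
  have ind: "indep V E ?I" unfolding indep_def nbhd_def using assms(2) by auto
  have disj: "nbhd V E ?I \<inter> (X \<inter> nbhd V E X) = {}"
    unfolding nbhd_def using sym inV by blast
  have sub: "nbhd V E ?I \<union> (X \<inter> nbhd V E X) \<subseteq> nbhd V E X"
    using nbhd_mono[of ?I X V E] by auto
  have fN: "finite (nbhd V E X)" using finite_subset[OF nbhd_sub fV] .
  have fX: "finite X" using finite_subset[OF assms(2) fV] .
  have "card (nbhd V E ?I \<union> (X \<inter> nbhd V E X)) \<le> card (nbhd V E X)"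
    using card_mono[OF fN sub] .
  moreover have "card (nbhd V E ?I \<union> (X \<inter> nbhd V E X)) = card (nbhd V E ?I) + card (X \<inter> nbhd V E X)"
  proof (rule card_Un_disjoint)
    show "finite (nbhd V E ?I)" using finite_subset[OF nbhd_sub fV] .
    show "finite (X \<inter> nbhd V E X)" using fN by blast
  qed (rule disj)
  moreover have "card X = card ?I + card (X \<inter> nbhd V E X)"
  proof -
    have "X = ?I \<union> (X \<inter> nbhd V E X)" by auto
    hence "card X = card (?I \<union> (X \<inter> nbhd V E X))" by simp
    also have "\<dots> = card ?I + card (X \<inter> nbhd V E X)"
      using fX by (intro card_Un_disjoint) auto
    finally show ?thesis .
  qed
  ultimately show ?thesis using ind unfolding dif_def by linarith
qed

theorem theorem1p7:
  fixes V :: "'a set" and E :: "'a \<Rightarrow> 'a \<Rightarrow> bool"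
  assumes "simple_graph V E"
  shows "card (nucleus V E) + card (diadem V E) \<le> 2 * indep_number V E"
proof -
  let ?c = "critical_difference V E"
  have fV: "finite V" using assms unfolding simple_graph_def by auto
  have sym: "\<And>u v. E u v \<Longrightarrow> E v u" and inV: "\<And>u v. E u v \<Longrightarrow> u \<in> V \<and> v \<in> V"
    using assms unfolding simple_graph_def by auto
  obtain X0 where X0: "X0 \<subseteq> V" "dif V E X0 = ?c" using crit_attained[OF fV] by blast
  have X0s: "X0 - nbhd V E X0 \<subseteq> V" using X0(1) by blast
  have ci0: "critical_indep V E (X0 - nbhd V E X0)"
    using strip[OF assms X0(1)] X0 crit_ge[OF fV X0s, of E]
    unfolding critical_indep_def by linarith
  let ?CI = "{T. critical_indep V E T}"
  have CIsub: "?CI \<subseteq> Pow V" unfolding critical_indep_def indep_def by auto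
  hence fCI: "finite ?CI" using finite_subset fV by (metis finite_Pow_iff)
  have "finite (card ` ?CI)" "card ` ?CI \<noteq> {}" using fCI ci0 by auto
  then have "Max (card ` ?CI) \<in> card ` ?CI" by (rule Max_in)
  then obtain S where S: "critical_indep V E S" "card S = Max (card ` ?CI)" by auto
  have mS: "max_critical_indep V E S" unfolding max_critical_indep_def
  proof (intro conjI allI impI)
    show "critical_indep V E S" by (rule S(1))
    fix T assume "critical_indep V E T"
    hence "card T \<in> card ` ?CI" by blast
    hence "card T \<le> Max (card ` ?CI)" using fCI by (intro Max_ge) auto
    thus "card T \<le> card S" using S(2) by simp
  qed
  have SV: "S \<subseteq> V" "dif V E S = ?c" "indep V E S"
    using S(1) unfolding critical_indep_def indep_def by auto
  let ?F = "{T. max_critical_indep V E T}"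
  have fF: "finite ?F" using fCI by (rule finite_subset[rotated]) (auto simp: max_critical_indep_def)
  have Fne: "?F \<noteq> {}" using mS by auto
  have Fcrit: "\<forall>X\<in>?F. X \<subseteq> V \<and> dif V E X = ?c"
    unfolding max_critical_indep_def critical_indep_def indep_def by blast
  define K where "K = nucleus V E"
  have Kc: "K \<subseteq> V" "dif V E K = ?c" using Inter_crit[OF fV fF Fne Fcrit]
    unfolding K_def nucleus_def by simp_all
  have KS: "K \<subseteq> S" using mS unfolding K_def nucleus_def by blast
  have key: "diadem V E \<subseteq> S \<union> (nbhd V E S - nbhd V E K)"
  proof
    fix v assume "v \<in> diadem V E"
    then obtain T where T: "max_critical_indep V E T" "v \<in> T" unfolding diadem_def by auto
    have TV: "T \<subseteq> V" "dif V E T = ?c" "indep V E T"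
      using T(1) unfolding max_critical_indep_def critical_indep_def indep_def by auto
    have KT: "K \<subseteq> T" using T(1) unfolding K_def nucleus_def by auto
    have vK: "v \<notin> nbhd V E K"
    proof
      assume "v \<in> nbhd V E K"
      then obtain k where "k \<in> K" "E k v" unfolding nbhd_def by auto
      thus False using KT T(2) TV(3) unfolding indep_def by auto
    qed
    show "v \<in> S \<union> (nbhd V E S - nbhd V E K)"
    proof (cases "v \<in> S")
      case True thus ?thesis by auto
    next
      case False
      let ?X = "S \<union> T"
      have Xc: "?X \<subseteq> V" "dif V E ?X = ?c" using crit_Un_Int[OF fV SV(1) TV(1) SV(2) TV(2)] SV TV by auto
      let ?I = "?X - nbhd V E ?X"
      have Ii: "indep V E ?I" and Id: "dif V E ?X \<le> dif V E ?I" using strip[OF assms Xc(1)] by auto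
      have IV: "?I \<subseteq> V" using Xc by auto
      have Ic: "dif V E ?I = ?c" using Id Xc crit_ge[OF fV IV, of E] by auto
      have ISc: "dif V E (?I \<union> S) = ?c" using crit_Un_Int[OF fV IV SV(1) Ic SV(2)] by auto
      have ISi: "indep V E (?I \<union> S)"
        using Ii SV(3) IV SV(1) sym inV unfolding indep_def nbhd_def by blast
      have "critical_indep V E (?I \<union> S)" using ISc ISi unfolding critical_indep_def by auto
      hence "card (?I \<union> S) \<le> card S" using mS unfolding max_critical_indep_def by auto
      moreover have "finite (?I \<union> S)" using finite_subset[OF _ fV, of "?I \<union> S"] IV SV(1) by blast
      ultimately have "?I \<union> S = S" using card_seteq[of "?I \<union> S" S] by auto
      hence "v \<notin> ?I" using False by auto
      hence "v \<in> nbhd V E ?X" using T(2) by auto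
      then obtain x where x: "x \<in> S \<union> T" "E x v" unfolding nbhd_def by auto
      have "x \<notin> T" using x T(2) TV(3) unfolding indep_def by auto
      hence "v \<in> nbhd V E S" using x inV unfolding nbhd_def by auto
      thus ?thesis using vK by auto
    qed
  qed
  have fS: "finite S" using finite_subset[OF SV(1) fV] .
  have fNS: "finite (nbhd V E S)" using finite_subset[OF nbhd_sub fV] .
  have NKS: "nbhd V E K \<subseteq> nbhd V E S" using nbhd_mono[OF KS] .
  have "card (diadem V E) \<le> card (S \<union> (nbhd V E S - nbhd V E K))"
    using key fS fNS by (intro card_mono) auto
  also have "\<dots> \<le> card S + card (nbhd V E S - nbhd V E K)" by (rule card_Un_le)
  also have "card (nbhd V E S - nbhd V E K) = card (nbhd V E S) - card (nbhd V E K)"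
    using card_Diff_subset[OF finite_subset[OF NKS fNS] NKS] .
  finally have D: "card (diadem V E) \<le> card S + (card (nbhd V E S) - card (nbhd V E K))" .
  have "card (nbhd V E K) \<le> card (nbhd V E S)" using NKS fNS card_mono by blast
  moreover have "int (card K) - int (card (nbhd V E K)) = int (card S) - int (card (nbhd V E S))"
    using Kc(2) SV(2) unfolding dif_def by simp
  ultimately have D2: "card (diadem V E) + card K \<le> 2 * card S" using D by linarith
  have "card S \<le> indep_number V E" unfolding indep_number_def
  proof (rule Max_ge)
    show "finite (card ` {S. indep V E S})"
    proof -
      have "{S. indep V E S} \<subseteq> Pow V" unfolding indep_def by blast
      hence "finite {S. indep V E S}" using finite_subset fV by (metis finite_Pow_iff)
      thus ?thesis by (rule finite_imageI)
    qed
    show "card S \<in> card ` {S. indep V E S}" using SV(3) by auto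
  qed
  hence "card (nucleus V E) + card (diadem V E) \<le> 2 * indep_number V E" using D2 unfolding K_def by linarith
  thus ?thesis .
qed

end
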